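(* For generic $x_0,x_1,\dots,x_L$, the six-vertex partition function with domain-wall boundaries satisfies, for every $0\le m\le L$, \[ \sum_{i=0}^L\rho_i^{(m)}\,Z(X_i^0)=0, \] where $X_0^0:=X$ and \[ \rho_i^{(m)}=\begin{cases}\dfrac{c(x_m-x_0)}{b(x_m-x_0)}\displaystyle\prod_{k=1}^Lb(x_0-\mu_k)\prod_{\substack{k=1\\k\ne m}}^L\frac{a(x_0-x_k)}{b(x_0-x_k)} & i=0,\ m\ne0,\\[2ex] \displaystyle\prod_{k=1}^La(x_m-\mu_k)-\prod_{k=1}^Lb(x_m-\mu_k)\prod_{\substack{k=0\\k\ne m}}^L\frac{a(x_m-x_k)}{b(x_m-x_k)} & i=m,\\[2ex] \dfrac{c(x_m-x_i)}{b(x_m-x_i)}\displaystyle\prod_{k=1}^Lb(x_i-\mu_k)\prod_{\substack{k=0\\k\ne i,m}}^L\frac{a(x_i-x_k)}{b(x_i-x_k)} & \text{otherwise.}\end{cases} \]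
   Context: Six-vertex setup. Fix $\gamma\in\mathbb C$, $L\ge1$ and $\mu_1,\dots,\mu_L\in\mathbb C$. Let $a(x)=\sinh(x+\gamma)$, $b(x)=\sinh x$, $c(x)=\sinh\gamma$ (constant). With $v_1,v_2$ the standard basis of $\mathbb C^2$, let $R(x)$ be the matrix on $\mathbb C^2\otimes\mathbb C^2$ which in the ordered basis $v_1\otimes v_1,v_1\otimes v_2,v_2\otimes v_1,v_2\otimes v_2$ is $\begin{pmatrix}a(x)&0&0&0\\0&b(x)&c(x)&0\\0&c(x)&b(x)&0\\0&0&0&a(x)\end{pmatrix}$. On $\mathbb C^2_0\otimes(\mathbb C^2)^{\otimes L}$, let $T_0(x)=R_{01}(x-\mu_1)R_{02}(x-\mu_2)\cdots R_{0L}(x-\mu_L)$ (with $R_{0i}$ acting on the auxiliary factor $0$ and quantum factor $i$), written in the auxiliary space as $\begin{pmatrix}A(x)&B(x)\\C(x)&D(x)\end{pmatrix}$. With $|0\rangle=v_1^{\otimes L}$ and $\langle\bar0|=(v_2^* )^{\otimes L}$, the partition function of the six-vertex model with domain-wall boundaries is $Z(x_1,\dots,x_L)=\langle\bar0|B(x_1)B(x_2)\cdots B(x_L)|0\rangle$. Notation: $X=(x_1,\dots,x_L)$; for $1\le i\le L$, $X_i^0$ is $X$ with $x_i$ replaced by $x_0$. *)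

theory Defs
  imports Complex_Main
begin

definition wa :: "complex \<Rightarrow> complex \<Rightarrow> complex" where "wa \<gamma> x = sinh (x + \<gamma>)"
definition wb :: "complex \<Rightarrow> complex" where "wb x = sinh x"
definition wc :: "complex \<Rightarrow> complex \<Rightarrow> complex" where "wc \<gamma> x = sinh \<gamma>"

text \<open>Basis of C^2: False = v1, True = v2.
  Rmat g x a i b j is the matrix entry of R(x) in row v_a (x) v_i, column v_b (x) v_j
  (first factor auxiliary, second quantum).\<close>
definition Rmat :: "complex \<Rightarrow> complex \<Rightarrow> bool \<Rightarrow> bool \<Rightarrow> bool \<Rightarrow> bool \<Rightarrow> complex" where
  "Rmat g x a i b j =
     (if a = i \<and> b = j \<and> a = b then wa g x
      else if a \<noteq> i \<and> a = b \<and> i = j then wb x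
      else if a \<noteq> i \<and> a = j \<and> i = b then wc g x
      else 0)"

text \<open>Monodromy matrix on n sites: mono g mu x n al be s s' is the matrix element
  of the auxiliary (al,be) entry of R_01(x-mu 1) ... R_0n(x-mu n), between quantum basis states
  s (row) and s' (column), given as lists of length n (site k = k-th list entry).\<close>
fun mono :: "complex \<Rightarrow> (nat \<Rightarrow> complex) \<Rightarrow> complex \<Rightarrow> nat \<Rightarrow> bool \<Rightarrow> bool \<Rightarrow> bool list \<Rightarrow> bool list \<Rightarrow> complex" where
  "mono g mu x 0 al be s s' = (if al = be \<and> s = [] \<and> s' = [] then 1 else 0)"
| "mono g mu x (Suc n) al be s s' =
     (if length s = Suc n \<and> length s' = Suc n then
        (\<Sum>c\<in>(UNIV::bool set). mono g mu x n al c (butlast s) (butlast s')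
                                * Rmat g (x - mu (Suc n)) c (last s) be (last s'))
      else 0)"

definition Bop :: "complex \<Rightarrow> (nat \<Rightarrow> complex) \<Rightarrow> nat \<Rightarrow> complex \<Rightarrow> bool list \<Rightarrow> bool list \<Rightarrow> complex" where
  "Bop g mu L x = mono g mu x L False True"

fun Bprod :: "complex \<Rightarrow> (nat \<Rightarrow> complex) \<Rightarrow> nat \<Rightarrow> complex list \<Rightarrow> bool list \<Rightarrow> bool list \<Rightarrow> complex" where
  "Bprod g mu L [] s s' = (if s = s' then 1 else 0)"
| "Bprod g mu L (y # ys) s s' =
     (\<Sum>t\<in>{t. length t = L}. Bop g mu L y s t * Bprod g mu L ys t s')"

text \<open>Domain-wall partition function Z(y_1,...,y_L) = <0bar| B(y_1)...B(y_L) |0>,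
  with |0> = v1^{(x)L}, <0bar| = (v2^* )^{(x)L}.\<close>
definition Zdw :: "complex \<Rightarrow> (nat \<Rightarrow> complex) \<Rightarrow> nat \<Rightarrow> complex list \<Rightarrow> complex" where
  "Zdw g mu L ys = Bprod g mu L ys (replicate L True) (replicate L False)"

text \<open>Coefficients rho_i^(m); x is indexed by 0..L.\<close>
definition rho :: "complex \<Rightarrow> (nat \<Rightarrow> complex) \<Rightarrow> nat \<Rightarrow> (nat \<Rightarrow> complex) \<Rightarrow> nat \<Rightarrow> nat \<Rightarrow> complex" where
  "rho g mu L x m i =
    (if i = 0 \<and> m \<noteq> 0 then
       wc g (x m - x 0) / wb (x m - x 0) * (\<Prod>k=1..L. wb (x 0 - mu k))
       * (\<Prod>k\<in>{1..L} - {m}. wa g (x 0 - x k) / wb (x 0 - x k))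
     else if i = m then
       (\<Prod>k=1..L. wa g (x m - mu k))
       - (\<Prod>k=1..L. wb (x m - mu k)) * (\<Prod>k\<in>{0..L} - {m}. wa g (x m - x k) / wb (x m - x k))
     else
       wc g (x m - x i) / wb (x m - x i) * (\<Prod>k=1..L. wb (x i - mu k))
       * (\<Prod>k\<in>{0..L} - {i, m}. wa g (x i - x k) / wb (x i - x k)))"

end

theory Submission imports Defs "HOL-Library.Multiset" begin

lemma ybe0:
  fixes g u v :: complex
  shows "(\<Sum>d\<in>UNIV. \<Sum>d'\<in>UNIV. Rmat g u e e' d d' * (\<Sum>z\<in>UNIV. Rmat g (u+v) d i b z * Rmat g v d' z b' j))
       = (\<Sum>f\<in>UNIV. \<Sum>f'\<in>UNIV. (\<Sum>z\<in>UNIV. Rmat g v e' i f' z * Rmat g (u+v) e z f j) * Rmat g u f f' b b')"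
proof -
  have ex: "\<And>w::complex. sinh w = (exp w - inverse (exp w)) / 2"
    by (simp add: sinh_field_def exp_minus)
  have e: "exp u \<noteq> 0" "exp v \<noteq> 0" "exp g \<noteq> 0" by auto
  show ?thesis
    unfolding UNIV_bool Rmat_def wa_def wb_def wc_def
    apply (cases e; cases e'; cases b; cases b'; cases i; cases j)
    apply (simp_all add: ex exp_add)
    apply (simp_all add: field_simps e)
    done
qed


lemma ybe:
  fixes x y m :: complex and e e' i b b' j :: bool
  shows "(\<Sum>d\<in>UNIV. \<Sum>d'\<in>UNIV. Rmat g (x-y) e e' d d' * (\<Sum>z\<in>UNIV. Rmat g (x-m) d i b z * Rmat g (y-m) d' z b' j))
       = (\<Sum>f\<in>UNIV. \<Sum>f'\<in>UNIV. (\<Sum>z\<in>UNIV. Rmat g (y-m) e' i f' z * Rmat g (x-m) e z f j) * Rmat g (x-y) f f' b b')"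
  using ybe0[where u="x-y" and v="y-m" and g=g] by simp

definition lst :: "nat \<Rightarrow> bool list set" where "lst n = {t. length t = n}"

lemma finite_lst[simp]: "finite (lst n)"
  using finite_lists_length_eq[of "UNIV::bool set" n] by (simp add: lst_def)

lemma sum_lst_Suc: "(\<Sum>t\<in>lst (Suc n). f t) = (\<Sum>t\<in>lst n. \<Sum>z\<in>UNIV. f (t @ [z]))"
proof -
  have im: "lst (Suc n) = (\<lambda>p. fst p @ [snd p]) ` (lst n \<times> UNIV)"
  proof
    show "lst (Suc n) \<subseteq> (\<lambda>p. fst p @ [snd p]) ` (lst n \<times> UNIV)"
    proof
      fix t assume "t \<in> lst (Suc n)"
      then have "t = butlast t @ [last t]" "butlast t \<in> lst n"
        by (auto simp: lst_def) (metis append_butlast_last_id list.size(3) nat.distinct(1))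
      then show "t \<in> (\<lambda>p. fst p @ [snd p]) ` (lst n \<times> UNIV)"
        by (metis (no_types, lifting) SigmaI UNIV_I fst_conv image_eqI snd_conv)
    qed
  qed (auto simp: lst_def)
  have inj: "inj_on (\<lambda>p. fst p @ [snd p]) (lst n \<times> (UNIV::bool set))"
    by (auto simp: inj_on_def)
  show ?thesis
    by (simp add: im sum.reindex[OF inj] sum.cartesian_product split_def)
qed

lemma lst0: "lst 0 = {[]}" by (auto simp: lst_def)

lemma mono_len: "mono g mu x n a b s s' \<noteq> 0 \<Longrightarrow> length s = n \<and> length s' = n"
  by (cases n) (auto split: if_splits)

definition opm :: "nat \<Rightarrow> (bool list \<Rightarrow> bool list \<Rightarrow> complex) \<Rightarrow> (bool list \<Rightarrow> bool list \<Rightarrow> complex) \<Rightarrow> bool list \<Rightarrow> bool list \<Rightarrow> complex"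
  where "opm n P Q s s' = (\<Sum>t\<in>lst n. P s t * Q t s')"

lemma opm_zero: "length s \<noteq> n \<or> length s' \<noteq> n \<Longrightarrow> opm n (mono g mu x n a b) (mono g mu y n a' b') s s' = 0"
  unfolding opm_def
proof (rule sum.neutral, intro ballI)
  fix t assume H: "length s \<noteq> n \<or> length s' \<noteq> n"
  show "mono g mu x n a b s t * mono g mu y n a' b' t s' = 0"
    using H mono_len[of g mu x n a b s t] mono_len[of g mu y n a' b' t s'] by auto
qed

lemma opm_split: "length s = Suc n \<Longrightarrow> length s' = Suc n \<Longrightarrow>
  opm (Suc n) (mono g mu x (Suc n) a b) (mono g mu y (Suc n) a' b') s s' =
  (\<Sum>d\<in>UNIV. \<Sum>d'\<in>UNIV. opm n (mono g mu x n a d) (mono g mu y n a' d') (butlast s) (butlast s') *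
     (\<Sum>z\<in>UNIV. Rmat g (x - mu (Suc n)) d (last s) b z * Rmat g (y - mu (Suc n)) d' z b' (last s')))"
  unfolding opm_def sum_lst_Suc
  apply (simp add: lst_def UNIV_bool)
  apply (simp add: sum.distrib sum_distrib_left sum_distrib_right algebra_simps)
  done


lemma rtt:
  "(\<Sum>c\<in>UNIV. \<Sum>c'\<in>UNIV. Rmat g (x - y) a a' c c' * opm n (mono g mu x n c b) (mono g mu y n c' b') s s')
 = (\<Sum>c\<in>UNIV. \<Sum>c'\<in>UNIV. opm n (mono g mu y n a' c') (mono g mu x n a c) s s' * Rmat g (x - y) c c' b b')"
proof (induction n arbitrary: a a' b b' s s')
  case 0
  show ?case unfolding opm_def lst0 by (simp add: UNIV_bool Rmat_def)
next
  case (Suc n)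
  show ?case
  proof (cases "length s = Suc n \<and> length s' = Suc n")
    case False
    then have F: "length s \<noteq> Suc n \<or> length s' \<noteq> Suc n" by auto
    show ?thesis by (simp only: opm_zero[OF F] mult_zero_left mult_zero_right sum.neutral_const)
  next
    case True
    define m where "m = mu (Suc n)"
    define O1 where "O1 c d c' d' = opm n (mono g mu x n c d) (mono g mu y n c' d') (butlast s) (butlast s')" for c d c' d'
    define O2 where "O2 c d c' d' = opm n (mono g mu y n c d) (mono g mu x n c' d') (butlast s) (butlast s')" for c d c' d'
    define Lxy where "Lxy d b d' b' = (\<Sum>z\<in>UNIV. Rmat g (x-m) d (last s) b z * Rmat g (y-m) d' z b' (last s'))" for d b d' b'
    define Lyx where "Lyx d b d' b' = (\<Sum>z\<in>UNIV. Rmat g (y-m) d (last s) b z * Rmat g (x-m) d' z b' (last s'))" for d b d' b'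
    have "(\<Sum>c\<in>UNIV. \<Sum>c'\<in>UNIV. Rmat g (x - y) a a' c c' * opm (Suc n) (mono g mu x (Suc n) c b) (mono g mu y (Suc n) c' b') s s')
      = (\<Sum>c\<in>UNIV. \<Sum>c'\<in>UNIV. Rmat g (x - y) a a' c c' * (\<Sum>d\<in>UNIV. \<Sum>d'\<in>UNIV. O1 c d c' d' * Lxy d b d' b'))"
      by (simp add: opm_split True O1_def Lxy_def m_def)
    also have "\<dots> = (\<Sum>d\<in>UNIV. \<Sum>d'\<in>UNIV. (\<Sum>c\<in>UNIV. \<Sum>c'\<in>UNIV. Rmat g (x - y) a a' c c' * O1 c d c' d') * Lxy d b d' b')"
      by (simp add: UNIV_bool algebra_simps)
    also have "\<dots> = (\<Sum>d\<in>UNIV. \<Sum>d'\<in>UNIV. (\<Sum>c\<in>UNIV. \<Sum>c'\<in>UNIV. O2 a' c' a c * Rmat g (x - y) c c' d d') * Lxy d b d' b')"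
      unfolding O1_def O2_def by (simp only: Suc.IH)
    also have "\<dots> = (\<Sum>c\<in>UNIV. \<Sum>c'\<in>UNIV. O2 a' c' a c * (\<Sum>d\<in>UNIV. \<Sum>d'\<in>UNIV. Rmat g (x - y) c c' d d' * Lxy d b d' b'))"
      by (simp add: UNIV_bool algebra_simps)
    also have "\<dots> = (\<Sum>c\<in>UNIV. \<Sum>c'\<in>UNIV. O2 a' c' a c * (\<Sum>f\<in>UNIV. \<Sum>f'\<in>UNIV. Lyx c' f' c f * Rmat g (x - y) f f' b b'))"
      unfolding Lxy_def Lyx_def by (simp only: ybe)
    also have "\<dots> = (\<Sum>f\<in>UNIV. \<Sum>f'\<in>UNIV. (\<Sum>c\<in>UNIV. \<Sum>c'\<in>UNIV. O2 a' c' a c * Lyx c' f' c f) * Rmat g (x - y) f f' b b')"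
      by (simp add: UNIV_bool algebra_simps)
    also have "\<dots> = (\<Sum>c\<in>UNIV. \<Sum>c'\<in>UNIV. opm (Suc n) (mono g mu y (Suc n) a' c') (mono g mu x (Suc n) a c) s s' * Rmat g (x - y) c c' b b')"
      by (simp add: opm_split True O2_def Lyx_def m_def UNIV_bool algebra_simps)
    finally show ?thesis .
  qed
qed


lemma AB_rel:
  "wa g (x-y) * opm n (mono g mu x n False False) (mono g mu y n False True) s s'
   = wb (x-y) * opm n (mono g mu y n False True) (mono g mu x n False False) s s'
   + wc g (x-y) * opm n (mono g mu y n False False) (mono g mu x n False True) s s'"
  using rtt[of g x y False False n mu False True s s'] by (simp add: UNIV_bool Rmat_def algebra_simps)

lemma BB_rel:
  "wa g (x-y) * opm n (mono g mu x n False True) (mono g mu y n False True) s s'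
   = wa g (x-y) * opm n (mono g mu y n False True) (mono g mu x n False True) s s'"
  using rtt[of g x y False False n mu True True s s'] by (simp add: UNIV_bool Rmat_def algebra_simps)

lemma cont_Rmat: "continuous_on UNIV (\<lambda>x. Rmat g (x - m) a i b j)"
  by (cases a; cases i; cases b; cases j) (auto simp: Rmat_def wa_def wb_def wc_def intro!: continuous_intros)

lemma cont_mono: "continuous_on UNIV (\<lambda>x. mono g mu x n a b s s')"
proof (induction n arbitrary: a b s s')
  case 0
  then show ?case by simp
next
  case (Suc n)
  show ?case
  proof (cases "length s = Suc n \<and> length s' = Suc n")
    case True
    then show ?thesis by (simp del: mono.simps(1)) (intro continuous_intros Suc.IH cont_Rmat)
  next
    case False
    then have "(\<lambda>x. mono g mu x (Suc n) a b s s') = (\<lambda>x. 0)" by auto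
    show ?thesis by (subst \<open>(\<lambda>x. mono g mu x (Suc n) a b s s') = (\<lambda>x. 0)\<close>) (rule continuous_on_const)
  qed
qed

lemma cont_opm: "continuous_on UNIV (\<lambda>x. opm n (mono g mu x n a b) (mono g mu y n a' b') s s')"
  unfolding opm_def by (auto intro!: continuous_intros continuous_on_compose2[OF cont_mono])

lemma cont_opm2: "continuous_on UNIV (\<lambda>x. opm n (mono g mu y n a' b') (mono g mu x n a b) s s')"
  unfolding opm_def by (auto intro!: continuous_intros continuous_on_compose2[OF cont_mono])

lemma sinh_of_real': "sinh (complex_of_real r) = complex_of_real (sinh r)"
  by (simp add: sinh_field_def exp_of_real flip: of_real_minus)

lemma sinh_seq_eventually:
  fixes w :: complex
  shows "eventually (\<lambda>n. sinh (w + of_real (1 / real (Suc n))) \<noteq> 0) sequentially"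
proof -
  have uniq: "n1 = n2" if "sinh (w + of_real (1 / real (Suc n1))) = 0" "sinh (w + of_real (1 / real (Suc n2))) = 0" for n1 n2
  proof -
    let ?a = "w + of_real (1 / real (Suc n1))" and ?b = "w + of_real (1 / real (Suc n2))"
    define r where "r = 1 / real (Suc n1) - 1 / real (Suc n2)"
    have "sinh (?a - ?b) = 0" using that by (simp only: sinh_diff) simp
    moreover have "?a - ?b = complex_of_real r" by (simp add: r_def)
    ultimately have "sinh (complex_of_real r) = 0" by metis
    then have "complex_of_real (sinh r) = 0" by (simp only: sinh_of_real')
    then have "r = 0" by simp
    then show ?thesis by (simp add: r_def)
  qed
  show ?thesis
  proof (cases "\<exists>N. sinh (w + of_real (1 / real (Suc N))) = 0")
    case True
    then obtain N where N: "sinh (w + of_real (1 / real (Suc N))) = 0" by blast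
    show ?thesis unfolding eventually_sequentially
      by (rule exI[of _ "Suc N"]) (use uniq[OF _ N] in fastforce)
  next
    case False
    then show ?thesis by simp
  qed
qed

lemma BB_comm:
  "opm n (mono g mu x n False True) (mono g mu y n False True) s s'
   = opm n (mono g mu y n False True) (mono g mu x n False True) s s'"
proof -
  define F where "F x = opm n (mono g mu x n False True) (mono g mu y n False True) s s'
   - opm n (mono g mu y n False True) (mono g mu x n False True) s s'" for x
  have cF: "continuous_on UNIV F" unfolding F_def by (intro continuous_intros cont_opm cont_opm2)
  define xs where "xs k = x + of_real (1 / real (Suc k))" for k
  have l0: "(\<lambda>k. 1 / real (Suc k)) \<longlonglongrightarrow> 0" by (rule LIMSEQ_inverse_real_of_nat[unfolded inverse_eq_divide])
  have l1: "(\<lambda>k. complex_of_real (1 / real (Suc k))) \<longlonglongrightarrow> 0"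
    using tendsto_of_real[OF l0] by (simp only: of_real_0)
  have "xs \<longlonglongrightarrow> x" unfolding xs_def using tendsto_add[OF tendsto_const[of x] l1] by simp
  then have lim: "(\<lambda>k. F (xs k)) \<longlonglongrightarrow> F x"
    by (rule continuous_on_tendsto_compose[OF cF]) auto
  have ev: "eventually (\<lambda>k. F (xs k) = 0) sequentially"
  proof -
    have "eventually (\<lambda>k. sinh ((x - y + g) + of_real (1 / real (Suc k))) \<noteq> 0) sequentially"
      by (rule sinh_seq_eventually)
    then show ?thesis
    proof (rule eventually_mono)
      fix k assume "sinh ((x - y + g) + of_real (1 / real (Suc k))) \<noteq> 0"
      then have "wa g (xs k - y) \<noteq> 0" unfolding wa_def xs_def by (simp add: algebra_simps)
      then show "F (xs k) = 0" unfolding F_def using BB_rel[of g "xs k" y n mu s s'] by simp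
    qed
  qed
  have "(\<lambda>k. F (xs k)) \<longlonglongrightarrow> 0"
    using tendsto_cong[OF ev] by simp
  then have "F x = 0" using lim LIMSEQ_unique by blast
  then show ?thesis unfolding F_def by simp
qed


lemma BA_exch:
  assumes "wb (z - y) \<noteq> 0"
  shows "opm n (mono g mu y n False True) (mono g mu z n False False) s s'
    = wa g (z-y) / wb (z-y) * opm n (mono g mu z n False False) (mono g mu y n False True) s s'
    - wc g (z-y) / wb (z-y) * opm n (mono g mu y n False False) (mono g mu z n False True) s s'"
  using AB_rel[of g z y n mu s s'] assms by (simp add: field_simps)

lemma sum_delta_lst: fixes f :: "bool list \<Rightarrow> complex" shows "(\<Sum>t\<in>lst L. f t * (if t = s' then 1 else 0)) = (if length s' = L then f s' else 0)"
proof -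
  have "(\<Sum>t\<in>lst L. f t * (if t = s' then 1 else 0)) = (\<Sum>t\<in>lst L. if t = s' then f t else 0)"
    by (rule sum.cong) auto
  also have "\<dots> = (if s' \<in> lst L then f s' else 0)" by (rule sum.delta) simp
  finally show ?thesis by (simp add: lst_def)
qed

lemma sum_delta_lst': fixes f :: "bool list \<Rightarrow> complex" shows "(\<Sum>t\<in>lst L. (if s = t then 1 else 0) * f t) = (if length s = L then f s else 0)"
proof -
  have "(\<Sum>t\<in>lst L. (if s = t then 1 else 0) * f t) = (\<Sum>t\<in>lst L. if s = t then f t else 0)"
    by (rule sum.cong) auto
  also have "\<dots> = (if s \<in> lst L then f s else 0)" by (rule sum.delta') simp
  finally show ?thesis by (simp add: lst_def)
qed

lemma Bop_len: "Bop g mu L y s s' \<noteq> 0 \<Longrightarrow> length s = L \<and> length s' = L"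
  unfolding Bop_def by (rule mono_len)

lemma Bprod_Cons: "Bprod g mu L (y # ys) s s' = (\<Sum>t\<in>lst L. Bop g mu L y s t * Bprod g mu L ys t s')"
  by (simp add: lst_def)

lemma Bprod_snoc: "Bprod g mu L (ys @ [y]) s s' = (\<Sum>t\<in>lst L. Bprod g mu L ys s t * Bop g mu L y t s')"
proof (induction ys arbitrary: s)
  case Nil
  show ?case
    by (simp only: append_Nil Bprod_Cons Bprod.simps(1) sum_delta_lst sum_delta_lst')
       (use Bop_len[of g mu L y s s'] in auto)
next
  case (Cons a ys)
  have "Bprod g mu L ((a # ys) @ [y]) s s' = (\<Sum>t\<in>lst L. Bop g mu L a s t * (\<Sum>u\<in>lst L. Bprod g mu L ys t u * Bop g mu L y u s'))"
    by (simp only: append_Cons Bprod_Cons Cons.IH)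
  also have "\<dots> = (\<Sum>u\<in>lst L. (\<Sum>t\<in>lst L. Bop g mu L a s t * Bprod g mu L ys t u) * Bop g mu L y u s')"
    by (simp only: sum_distrib_left sum_distrib_right mult.assoc) (rule sum.swap)
  also have "\<dots> = (\<Sum>u\<in>lst L. Bprod g mu L (a # ys) s u * Bop g mu L y u s')"
    by (simp only: Bprod_Cons)
  finally show ?case .
qed

lemma Bprod_swap: "Bprod g mu L (a # b # r) s s' = Bprod g mu L (b # a # r) s s'"
proof -
  have "Bprod g mu L (a # b # r) s s' = (\<Sum>u\<in>lst L. opm L (Bop g mu L a) (Bop g mu L b) s u * Bprod g mu L r u s')"
    unfolding Bprod_Cons opm_def
    by (simp only: sum_distrib_left sum_distrib_right mult.assoc) (rule sum.swap)
  also have "\<dots> = (\<Sum>u\<in>lst L. opm L (Bop g mu L b) (Bop g mu L a) s u * Bprod g mu L r u s')"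
    unfolding Bop_def by (simp only: BB_comm[of L g mu a b])
  also have "\<dots> = Bprod g mu L (b # a # r) s s'"
    unfolding Bprod_Cons opm_def
    by (simp only: sum_distrib_left sum_distrib_right mult.assoc) (rule sum.swap)
  finally show ?thesis .
qed

lemma Bprod_move: "Bprod g mu L (ys1 @ a # ys2) = Bprod g mu L (a # ys1 @ ys2)"
proof (induction ys1)
  case Nil
  then show ?case by simp
next
  case (Cons b ys1)
  show ?case
  proof (intro ext)
    fix s s'
    have "Bprod g mu L ((b # ys1) @ a # ys2) s s' = Bprod g mu L (b # a # ys1 @ ys2) s s'"
      by (simp only: append_Cons Bprod_Cons Cons.IH)
    also have "\<dots> = Bprod g mu L (a # (b # ys1) @ ys2) s s'" using Bprod_swap[of g mu L b a "ys1@ys2" s s'] by simp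
    finally show "Bprod g mu L ((b # ys1) @ a # ys2) s s' = Bprod g mu L (a # (b # ys1) @ ys2) s s'" .
  qed
qed

lemma Bprod_perm: "mset xs = mset ys \<Longrightarrow> Bprod g mu L xs = Bprod g mu L ys"
proof (induction xs arbitrary: ys)
  case Nil
  then have "ys = []" by simp
  then show ?case by simp
next
  case (Cons a xs)
  then have "a \<in> set ys" by (metis list.set_intros(1) set_mset_mset)
  then obtain ys1 ys2 where ys: "ys = ys1 @ a # ys2" by (meson split_list)
  then have "mset xs = mset (ys1 @ ys2)" using Cons.prems by simp
  then have "Bprod g mu L xs = Bprod g mu L (ys1 @ ys2)" by (rule Cons.IH)
  then show ?case unfolding ys Bprod_move by (simp add: fun_eq_iff Bprod_Cons)
qed

lemma A_ket: "mono g mu z n False False t (replicate n False) = (if t = replicate n False then (\<Prod>k=1..n. wa g (z - mu k)) else 0)"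
proof (induction n arbitrary: t)
  case 0
  then show ?case by simp
next
  case (Suc n)
  show ?case
  proof (cases t rule: rev_exhaust)
    case Nil
    then show ?thesis by simp
  next
    case (snoc t' c)
    have r: "replicate (Suc n) False = replicate n False @ [False]" by (simp add: replicate_append_same)
    show ?thesis
      unfolding snoc r
      by (cases c) (auto simp: UNIV_bool Rmat_def Suc.IH prod.nat_ivl_Suc' mult.commute)
  qed
qed

lemma A_bra: "mono g mu z n False False (replicate n True) t = (if t = replicate n True then (\<Prod>k=1..n. wb (z - mu k)) else 0)"
proof (induction n arbitrary: t)
  case 0
  then show ?case by simp
next
  case (Suc n)
  show ?case
  proof (cases t rule: rev_exhaust)
    case Nil
    then show ?thesis by simp
  next
    case (snoc t' c)
    have r: "replicate (Suc n) True = replicate n True @ [True]" by (simp add: replicate_append_same)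
    show ?thesis
      unfolding snoc r
      by (cases c) (auto simp: UNIV_bool Rmat_def Suc.IH prod.nat_ivl_Suc' mult.commute)
  qed
qed

lemma sinh_id3: "sinh (u - v + g) * sinh (v - w) + sinh (w - v + g) * sinh (u - v) = sinh g * sinh (u - (w::complex))"
proof -
  have ex: "\<And>w::complex. sinh w = (exp w - inverse (exp w)) / 2"
    by (simp add: sinh_field_def exp_minus)
  have e: "exp u \<noteq> 0" "exp v \<noteq> 0" "exp g \<noteq> 0" "exp w \<noteq> 0" by auto
  show ?thesis
    by (simp add: ex exp_add exp_diff field_simps e)
qed

lemma scalar_id:
  assumes "wb (u - v) \<noteq> 0" "wb (v - w) \<noteq> 0" "wb (u - w) \<noteq> 0"
  shows "wa g (u-v) / wb (u-v) * (wc g (u-w) / wb (u-w)) - wc g (u-v) / wb (u-v) * (wc g (v-w) / wb (v-w))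
       = wc g (u-w) / wb (u-w) * (wa g (w-v) / wb (w-v))"
proof -
  have n: "wb (w - v) \<noteq> 0" using assms(2) unfolding wb_def by (metis minus_diff_eq sinh_minus neg_equal_0_iff_equal)
  have m: "wb (w - v) = - wb (v - w)" unfolding wb_def by (metis minus_diff_eq sinh_minus)
  have k: "sinh g * sinh (u - w) = sinh (u - v + g) * sinh (v - w) + sinh (w - v + g) * sinh (u - v)"
    by (simp add: sinh_id3)
  show ?thesis using assms n unfolding m
    unfolding wa_def wb_def wc_def
    by (simp add: field_simps k)
qed


lemma swap3:
  fixes f :: "'u \<Rightarrow> complex"
  assumes "finite A" "finite B"
  shows "(\<Sum>u\<in>A. f u * (c * (\<Sum>v\<in>B. g u v * h v))) = c * (\<Sum>v\<in>B. (\<Sum>u\<in>A. f u * g u v) * h v)"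
proof -
  have "(\<Sum>u\<in>A. f u * (c * (\<Sum>v\<in>B. g u v * h v))) = (\<Sum>u\<in>A. \<Sum>v\<in>B. c * (f u * (g u v * h v)))"
    by (rule sum.cong[OF refl]) (simp only: sum_distrib_left mult.left_commute)
  also have "\<dots> = (\<Sum>v\<in>B. \<Sum>u\<in>A. c * (f u * (g u v * h v)))" by (rule sum.swap)
  also have "\<dots> = c * (\<Sum>v\<in>B. (\<Sum>u\<in>A. f u * g u v) * h v)"
    by (simp only: sum_distrib_left sum_distrib_right mult.assoc)
  finally show ?thesis .
qed

lemma lin_sum:
  fixes f q :: "'v \<Rightarrow> complex" and h :: "'k \<Rightarrow> 'v \<Rightarrow> complex"
  assumes "finite V" "finite K"
  shows "(\<Sum>v\<in>V. (a * f v - (\<Sum>k\<in>K. c k * h k v)) * q v)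
       = a * (\<Sum>v\<in>V. f v * q v) - (\<Sum>k\<in>K. c k * (\<Sum>v\<in>V. h k v * q v))"
proof -
  have "(\<Sum>v\<in>V. (a * f v - (\<Sum>k\<in>K. c k * h k v)) * q v) = (\<Sum>v\<in>V. a * (f v * q v) - (\<Sum>k\<in>K. c k * (h k v * q v)))"
    by (rule sum.cong[OF refl]) (simp only: left_diff_distrib sum_distrib_right mult.assoc)
  also have "\<dots> = a * (\<Sum>v\<in>V. f v * q v) - (\<Sum>v\<in>V. \<Sum>k\<in>K. c k * (h k v * q v))"
    by (simp only: sum_subtractf sum_distrib_left)
  also have "(\<Sum>v\<in>V. \<Sum>k\<in>K. c k * (h k v * q v)) = (\<Sum>k\<in>K. \<Sum>v\<in>V. c k * (h k v * q v))" by (rule sum.swap)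
  also have "\<dots> = (\<Sum>k\<in>K. c k * (\<Sum>v\<in>V. h k v * q v))" by (simp only: sum_distrib_left)
  finally show ?thesis .
qed

lemma main:
  fixes x :: "nat \<Rightarrow> complex" and js :: "nat list"
  assumes "distinct js" "j0 \<notin> set js"
    and "\<forall>p\<in>insert j0 (set js). \<forall>q\<in>insert j0 (set js). p \<noteq> q \<longrightarrow> wb (x p - x q) \<noteq> 0"
  shows "(\<Sum>s\<in>lst L. Bprod g mu L (map x js) (replicate L True) s * mono g mu (x j0) L False False s t)
   = (\<Prod>k\<in>set js. wa g (x j0 - x k) / wb (x j0 - x k)) * (\<Prod>k=1..L. wb (x j0 - mu k)) * Bprod g mu L (map x js) (replicate L True) t
   - (\<Sum>k\<in>set js. wc g (x j0 - x k) / wb (x j0 - x k) * (\<Prod>l\<in>set js - {k}. wa g (x k - x l) / wb (x k - x l))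
        * (\<Prod>k'=1..L. wb (x k - mu k')) * Bprod g mu L (map (x(k := x j0)) js) (replicate L True) t)"
  using assms
proof (induction js arbitrary: j0 t rule: rev_induct)
  case Nil
  have "(\<Sum>s\<in>lst L. Bprod g mu L [] (replicate L True) s * mono g mu (x j0) L False False s t)
     = mono g mu (x j0) L False False (replicate L True) t"
    by (simp only: Bprod.simps(1) sum_delta_lst') simp
  then show ?case by (simp add: A_bra)
next
  case (snoc j js)
  define S where "S = set js"
  have dj: "distinct js" and jS: "j \<notin> S" and j0S: "j0 \<notin> S" and jj0: "j0 \<noteq> j"
    using snoc.prems by (auto simp: S_def)
  have gen: "\<forall>p\<in>insert j0 (insert j S). \<forall>q\<in>insert j0 (insert j S). p \<noteq> q \<longrightarrow> wb (x p - x q) \<noteq> 0"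
    using snoc.prems(3) by (simp add: S_def)
  have genj: "\<forall>p\<in>insert j (set js). \<forall>q\<in>insert j (set js). p \<noteq> q \<longrightarrow> wb (x p - x q) \<noteq> 0"
    using gen by (auto simp: S_def)
  have genj0: "\<forall>p\<in>insert j0 (set js). \<forall>q\<in>insert j0 (set js). p \<noteq> q \<longrightarrow> wb (x p - x q) \<noteq> 0"
    using gen by (auto simp: S_def)
  have jS': "j \<notin> set js" and j0S': "j0 \<notin> set js" using jS j0S by (auto simp: S_def)
  define z where "z = x j0"
  define y where "y = x j"
  define T where "T = replicate L True"
  define W where "W ys v = Bprod g mu L ys T v" for ys v
  define al where "al p q = wa g (p - q) / wb (p - q)" for p q
  define be where "be p q = wc g (p - q) / wb (p - q)" for p q
  define bb where "bb p = (\<Prod>k=1..L. wb (p - mu k))" for p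
  have bzy: "wb (z - y) \<noteq> 0" using gen jj0 by (auto simp: z_def y_def)
  have IHz: "\<And>v. (\<Sum>u\<in>lst L. W (map x js) u * mono g mu z L False False u v)
     = (\<Prod>k\<in>S. al z (x k)) * bb z * W (map x js) v
     - (\<Sum>k\<in>S. be z (x k) * (\<Prod>l\<in>S - {k}. al (x k) (x l)) * bb (x k) * W (map (x(k := z)) js) v)"
    unfolding S_def W_def al_def be_def bb_def z_def T_def by (rule snoc.IH[OF dj j0S' genj0])
  have IHy: "\<And>v. (\<Sum>u\<in>lst L. W (map x js) u * mono g mu y L False False u v)
     = (\<Prod>k\<in>S. al y (x k)) * bb y * W (map x js) v
     - (\<Sum>k\<in>S. be y (x k) * (\<Prod>l\<in>S - {k}. al (x k) (x l)) * bb (x k) * W (map (x(k := y)) js) v)"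
    unfolding S_def W_def al_def be_def bb_def y_def T_def by (rule snoc.IH[OF dj jS' genj])
  have snocW: "\<And>ys w. (\<Sum>v\<in>lst L. W ys v * mono g mu w L False True v t) = W (ys @ [w]) t"
    unfolding W_def Bprod_snoc Bop_def ..
  have "(\<Sum>s\<in>lst L. W (map x (js @ [j])) s * mono g mu z L False False s t)
      = (\<Sum>s\<in>lst L. (\<Sum>u\<in>lst L. W (map x js) u * mono g mu y L False True u s) * mono g mu z L False False s t)"
    unfolding W_def by (simp add: Bprod_snoc Bop_def y_def)
  also have "\<dots> = (\<Sum>u\<in>lst L. W (map x js) u * opm L (mono g mu y L False True) (mono g mu z L False False) u t)"
    unfolding opm_def by (simp only: sum_distrib_left sum_distrib_right mult.assoc) (rule sum.swap)
  also have "\<dots> = (\<Sum>u\<in>lst L. W (map x js) u * (al z y * opm L (mono g mu z L False False) (mono g mu y L False True) u t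
      - be z y * opm L (mono g mu y L False False) (mono g mu z L False True) u t))"
    by (simp only: BA_exch[OF bzy] al_def be_def)
  also have "\<dots> = al z y * (\<Sum>v\<in>lst L. (\<Sum>u\<in>lst L. W (map x js) u * mono g mu z L False False u v) * mono g mu y L False True v t)
      - be z y * (\<Sum>v\<in>lst L. (\<Sum>u\<in>lst L. W (map x js) u * mono g mu y L False False u v) * mono g mu z L False True v t)"
    unfolding opm_def right_diff_distrib sum_subtractf by (simp only: swap3[OF finite_lst finite_lst])
  also have "\<dots> = al z y * ((\<Prod>k\<in>S. al z (x k)) * bb z * W (map x js @ [y]) t
       - (\<Sum>k\<in>S. be z (x k) * (\<Prod>l\<in>S - {k}. al (x k) (x l)) * bb (x k) * W (map (x(k := z)) js @ [y]) t))
     - be z y * ((\<Prod>k\<in>S. al y (x k)) * bb y * W (map x js @ [z]) t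
       - (\<Sum>k\<in>S. be y (x k) * (\<Prod>l\<in>S - {k}. al (x k) (x l)) * bb (x k) * W (map (x(k := y)) js @ [z]) t))"
    by (simp only: IHz IHy lin_sum[OF finite_lst finite_set[of js, folded S_def]] snocW)
  finally have L1: "(\<Sum>s\<in>lst L. W (map x (js @ [j])) s * mono g mu z L False False s t) = \<dots>" .
  have perm: "W (map (x(k:=y)) js @ [z]) t = W (map (x(k:=z)) js @ [y]) t" if "k \<in> S" for k
  proof -
    obtain js1 js2 where js: "js = js1 @ k # js2" using \<open>k \<in> S\<close> unfolding S_def by (meson split_list)
    have nk: "k \<notin> set js1" "k \<notin> set js2" using dj js by auto
    show ?thesis unfolding W_def js
      by (rule Bprod_perm[THEN fun_cong, THEN fun_cong]) (simp add: nk)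
  qed
  have sumeq: "al z y * (\<Sum>k\<in>S. be z (x k) * (\<Prod>l\<in>S - {k}. al (x k) (x l)) * bb (x k) * W (map (x(k := z)) js @ [y]) t)
     - be z y * (\<Sum>k\<in>S. be y (x k) * (\<Prod>l\<in>S - {k}. al (x k) (x l)) * bb (x k) * W (map (x(k := y)) js @ [z]) t)
     = (\<Sum>k\<in>S. be z (x k) * (al (x k) y * (\<Prod>l\<in>S - {k}. al (x k) (x l))) * bb (x k) * W (map (x(k := z)) js @ [y]) t)"
    unfolding sum_distrib_left sum_subtractf[symmetric]
  proof (rule sum.cong[OF refl])
    fix k assume kS: "k \<in> S"
    define Q where "Q = (\<Prod>l\<in>S - {k}. al (x k) (x l)) * bb (x k) * W (map (x(k := z)) js @ [y]) t"
    have b1: "wb (y - x k) \<noteq> 0" "wb (z - x k) \<noteq> 0" using gen kS jS j0S by (auto simp: y_def z_def)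
    have sc: "al z y * be z (x k) - be z y * be y (x k) = be z (x k) * al (x k) y"
      unfolding al_def be_def by (rule scalar_id[OF bzy b1])
    have "al z y * (be z (x k) * (\<Prod>l\<in>S - {k}. al (x k) (x l)) * bb (x k) * W (map (x(k := z)) js @ [y]) t)
     - be z y * (be y (x k) * (\<Prod>l\<in>S - {k}. al (x k) (x l)) * bb (x k) * W (map (x(k := y)) js @ [z]) t)
     = (al z y * be z (x k) - be z y * be y (x k)) * Q"
      unfolding Q_def perm[OF kS] by (simp add: algebra_simps)
    also have "\<dots> = be z (x k) * (al (x k) y * (\<Prod>l\<in>S - {k}. al (x k) (x l))) * bb (x k) * W (map (x(k := z)) js @ [y]) t"
      unfolding sc Q_def by (simp add: algebra_simps)
    finally show "al z y * (be z (x k) * (\<Prod>l\<in>S - {k}. al (x k) (x l)) * bb (x k) * W (map (x(k := z)) js @ [y]) t)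
     - be z y * (be y (x k) * (\<Prod>l\<in>S - {k}. al (x k) (x l)) * bb (x k) * W (map (x(k := y)) js @ [z]) t)
     = be z (x k) * (al (x k) y * (\<Prod>l\<in>S - {k}. al (x k) (x l))) * bb (x k) * W (map (x(k := z)) js @ [y]) t" .
  qed
  have setj: "set (js @ [j]) = insert j S" by (simp add: S_def)
  have fS: "finite S" by (simp add: S_def)
  have e1: "(\<Prod>k\<in>set (js @ [j]). wa g (x j0 - x k) / wb (x j0 - x k)) = al z y * (\<Prod>k\<in>S. al z (x k))"
    unfolding setj using fS jS by (simp add: al_def z_def y_def)
  have e2: "(\<Sum>k\<in>set (js @ [j]). wc g (x j0 - x k) / wb (x j0 - x k) * (\<Prod>l\<in>set (js @ [j]) - {k}. wa g (x k - x l) / wb (x k - x l))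
        * (\<Prod>k'=1..L. wb (x k - mu k')) * Bprod g mu L (map (x(k := x j0)) (js @ [j])) (replicate L True) t)
     = be z y * (\<Prod>l\<in>S. al y (x l)) * bb y * W (map x js @ [z]) t
       + (\<Sum>k\<in>S. be z (x k) * (al (x k) y * (\<Prod>l\<in>S - {k}. al (x k) (x l))) * bb (x k) * W (map (x(k := z)) js @ [y]) t)"
  proof -
    have "insert j S - {j} = S" using jS by auto
    then have t1: "wc g (x j0 - x j) / wb (x j0 - x j) * (\<Prod>l\<in>insert j S - {j}. wa g (x j - x l) / wb (x j - x l))
        * (\<Prod>k'=1..L. wb (x j - mu k')) * Bprod g mu L (map (x(j := x j0)) (js @ [j])) (replicate L True) t
       = be z y * (\<Prod>l\<in>S. al y (x l)) * bb y * W (map x js @ [z]) t"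
      using jS' by (simp add: be_def al_def bb_def W_def T_def y_def z_def)
    have t2: "(\<Sum>k\<in>S. wc g (x j0 - x k) / wb (x j0 - x k) * (\<Prod>l\<in>insert j S - {k}. wa g (x k - x l) / wb (x k - x l))
        * (\<Prod>k'=1..L. wb (x k - mu k')) * Bprod g mu L (map (x(k := x j0)) (js @ [j])) (replicate L True) t)
      = (\<Sum>k\<in>S. be z (x k) * (al (x k) y * (\<Prod>l\<in>S - {k}. al (x k) (x l))) * bb (x k) * W (map (x(k := z)) js @ [y]) t)"
    proof (rule sum.cong[OF refl])
      fix k assume kS: "k \<in> S"
      then have kj: "k \<noteq> j" using jS by auto
      have "insert j S - {k} = insert j (S - {k})" using kj by auto
      moreover have "j \<notin> S - {k}" using jS by auto
      ultimately have "(\<Prod>l\<in>insert j S - {k}. wa g (x k - x l) / wb (x k - x l)) = al (x k) y * (\<Prod>l\<in>S - {k}. al (x k) (x l))"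
        using fS by (simp add: al_def y_def)
      then show "wc g (x j0 - x k) / wb (x j0 - x k) * (\<Prod>l\<in>insert j S - {k}. wa g (x k - x l) / wb (x k - x l))
        * (\<Prod>k'=1..L. wb (x k - mu k')) * Bprod g mu L (map (x(k := x j0)) (js @ [j])) (replicate L True) t
        = be z (x k) * (al (x k) y * (\<Prod>l\<in>S - {k}. al (x k) (x l))) * bb (x k) * W (map (x(k := z)) js @ [y]) t"
        using kj by (simp add: be_def bb_def W_def T_def y_def z_def)
    qed
    show ?thesis unfolding setj by (simp only: sum.insert[OF fS jS] t1 t2)
  qed
  have "(\<Sum>s\<in>lst L. Bprod g mu L (map x (js @ [j])) (replicate L True) s * mono g mu (x j0) L False False s t)
     = (\<Sum>s\<in>lst L. W (map x (js @ [j])) s * mono g mu z L False False s t)" by (simp add: W_def T_def z_def)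
  also note L1
  also have "al z y * ((\<Prod>k\<in>S. al z (x k)) * bb z * W (map x js @ [y]) t
       - (\<Sum>k\<in>S. be z (x k) * (\<Prod>l\<in>S - {k}. al (x k) (x l)) * bb (x k) * W (map (x(k := z)) js @ [y]) t))
     - be z y * ((\<Prod>k\<in>S. al y (x k)) * bb y * W (map x js @ [z]) t
       - (\<Sum>k\<in>S. be y (x k) * (\<Prod>l\<in>S - {k}. al (x k) (x l)) * bb (x k) * W (map (x(k := y)) js @ [z]) t))
     = al z y * (\<Prod>k\<in>S. al z (x k)) * bb z * W (map x js @ [y]) t - be z y * (\<Prod>k\<in>S. al y (x k)) * bb y * W (map x js @ [z]) t
       - (al z y * (\<Sum>k\<in>S. be z (x k) * (\<Prod>l\<in>S - {k}. al (x k) (x l)) * bb (x k) * W (map (x(k := z)) js @ [y]) t)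
     - be z y * (\<Sum>k\<in>S. be y (x k) * (\<Prod>l\<in>S - {k}. al (x k) (x l)) * bb (x k) * W (map (x(k := y)) js @ [z]) t))"
    by (simp add: algebra_simps)
  also have "\<dots> = (\<Prod>k\<in>set (js @ [j]). wa g (x j0 - x k) / wb (x j0 - x k)) * (\<Prod>k=1..L. wb (x j0 - mu k)) * Bprod g mu L (map x (js @ [j])) (replicate L True) t
   - (\<Sum>k\<in>set (js @ [j]). wc g (x j0 - x k) / wb (x j0 - x k) * (\<Prod>l\<in>set (js @ [j]) - {k}. wa g (x k - x l) / wb (x k - x l))
        * (\<Prod>k'=1..L. wb (x k - mu k')) * Bprod g mu L (map (x(k := x j0)) (js @ [j])) (replicate L True) t)"
    unfolding sumeq e1 e2 by (simp add: bb_def W_def T_def z_def y_def algebra_simps)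
  finally show ?case .
qed


lemma Zdw_perm: "mset xs = mset ys \<Longrightarrow> Zdw g mu L xs = Zdw g mu L ys"
  unfolding Zdw_def by (simp add: Bprod_perm[of xs ys])

lemma img_upd:
  assumes "finite S" "k \<in> S" "k0 \<notin> S"
  shows "image_mset (x(k := x k0)) (mset_set S) = image_mset x (mset_set (insert k0 (S - {k})))"
proof -
  have "image_mset (x(k := x k0)) (mset_set S) = image_mset (x(k := x k0)) (add_mset k (mset_set (S - {k})))"
    using assms by (simp add: mset_set.remove)
  also have "\<dots> = add_mset (x k0) (image_mset (x(k := x k0)) (mset_set (S - {k})))" by simp
  also have "image_mset (x(k := x k0)) (mset_set (S - {k})) = image_mset x (mset_set (S - {k}))"
    using assms by (intro image_mset_cong) auto
  also have "add_mset (x k0) (image_mset x (mset_set (S - {k}))) = image_mset x (mset_set (insert k0 (S - {k})))"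
    using assms by (simp add: mset_set.insert)
  finally show ?thesis .
qed

lemma mset_filt: "mset (map x (filter (\<lambda>k. k \<noteq> i) [0..<L+1])) = image_mset x (mset_set ({0..L} - {i}))"
proof -
  have "set (filter (\<lambda>k. k \<noteq> i) [0..<L+1]) = {0..L} - {i}" by auto
  then have h: "mset (filter (\<lambda>k. k \<noteq> i) [0..<L+1]) = mset_set ({0..L} - {i})"
    by (metis distinct_filter distinct_upt mset_set_set)
  show ?thesis by (simp only: mset_map h)
qed

theorem corollary6p3:
  fixes g :: complex and mu x :: "nat \<Rightarrow> complex" and L m :: nat
  assumes "L \<ge> 1"
    and generic: "\<And>i j. i \<le> L \<Longrightarrow> j \<le> L \<Longrightarrow> i \<noteq> j \<Longrightarrow> wb (x i - x j) \<noteq> 0"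
    and "m \<le> L"
  shows "(\<Sum>i=0..L. rho g mu L x m i * Zdw g mu L (map (x(i := x 0)) [1..<L+1])) = 0"
proof -
  define I where "I = {0..L}"
  define Zh where "Zh i = Zdw g mu L (map x (filter (\<lambda>k. k \<noteq> i) [0..<L+1]))" for i
  define js where "js = filter (\<lambda>k. k \<noteq> m) [0..<L+1]"
  have fI: "finite I" by (simp add: I_def)
  have mI: "m \<in> I" using assms by (simp add: I_def)
  have setjs: "set js = I - {m}" by (auto simp: js_def I_def)
  have Z1: "Zdw g mu L (map (x(i := x 0)) [1..<L+1]) = Zh i" if "i \<in> I" for i
  proof (cases "i = 0")
    case True
    have "filter (\<lambda>k. k \<noteq> 0) [0..<L+1] = [1..<L+1]"
      by (simp add: upt_rec[of 0] filter_id_conv)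
    then show ?thesis using True by (simp add: Zh_def)
  next
    case False
    have "mset (map (x(i := x 0)) [1..<L+1]) = image_mset (x(i := x 0)) (mset_set {1..L})"
    proof -
      have "{1..<L+1} = {1..L}" by auto
      then show ?thesis by (simp only: mset_map mset_upt)
    qed
    also have "\<dots> = image_mset x (mset_set (insert 0 ({1..L} - {i})))"
      using that False by (intro img_upd) (auto simp: I_def)
    also have "insert 0 ({1..L} - {i}) = {0..L} - {i}" using False by auto
    finally have ms: "mset (map (x(i := x 0)) [1..<L+1]) = image_mset x (mset_set ({0..L} - {i}))" .
    show ?thesis unfolding Zh_def by (rule Zdw_perm) (simp only: mset_filt ms)
  qed
  have Z2: "Bprod g mu L (map (x(k := x m)) js) (replicate L True) (replicate L False) = Zh k" if "k \<in> I - {m}" for k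
  proof -
    have "mset (map (x(k := x m)) js) = image_mset (x(k := x m)) (mset_set (I - {m}))"
      unfolding js_def I_def by (rule mset_filt)
    also have "\<dots> = image_mset x (mset_set (insert m (I - {m} - {k})))"
      using that fI by (intro img_upd) auto
    also have "insert m (I - {m} - {k}) = {0..L} - {k}" using that mI by (auto simp: I_def)
    finally have ms: "mset (map (x(k := x m)) js) = image_mset x (mset_set ({0..L} - {k}))" .
    show ?thesis unfolding Zh_def Zdw_def[symmetric] by (rule Zdw_perm) (simp only: mset_filt ms)
  qed
  have Zm: "Bprod g mu L (map x js) (replicate L True) (replicate L False) = Zh m"
    by (simp add: Zh_def Zdw_def js_def)
  have gen: "\<forall>p\<in>insert m (set js). \<forall>q\<in>insert m (set js). p \<noteq> q \<longrightarrow> wb (x p - x q) \<noteq> 0"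
    using generic assms(3) by (auto simp: js_def)
  note M = main[of js m x g mu L "replicate L False", OF _ _ gen]
  have M2: "(\<Sum>s\<in>lst L. Bprod g mu L (map x js) (replicate L True) s * mono g mu (x m) L False False s (replicate L False))
     = Zh m * (\<Prod>k=1..L. wa g (x m - mu k))"
  proof -
    have "(\<Sum>s\<in>lst L. Bprod g mu L (map x js) (replicate L True) s * mono g mu (x m) L False False s (replicate L False))
      = (\<Sum>s\<in>lst L. Bprod g mu L (map x js) (replicate L True) s * (\<Prod>k=1..L. wa g (x m - mu k)) * (if s = replicate L False then 1 else 0))"
      by (rule sum.cong) (auto simp: A_ket)
    also have "\<dots> = Zh m * (\<Prod>k=1..L. wa g (x m - mu k))"
      by (subst sum_delta_lst) (simp add: Zm)
    finally show ?thesis .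
  qed
  have M3: "Zh m * (\<Prod>k=1..L. wa g (x m - mu k))
     = (\<Prod>k\<in>I - {m}. wa g (x m - x k) / wb (x m - x k)) * (\<Prod>k=1..L. wb (x m - mu k)) * Zh m
     - (\<Sum>k\<in>I - {m}. wc g (x m - x k) / wb (x m - x k) * (\<Prod>l\<in>I - {k, m}. wa g (x k - x l) / wb (x k - x l))
        * (\<Prod>k'=1..L. wb (x k - mu k')) * Zh k)"
  proof -
    have d: "distinct js" "m \<notin> set js" by (auto simp: js_def)
    have "Zh m * (\<Prod>k=1..L. wa g (x m - mu k))
     = (\<Prod>k\<in>I - {m}. wa g (x m - x k) / wb (x m - x k)) * (\<Prod>k=1..L. wb (x m - mu k)) * Zh m
     - (\<Sum>k\<in>I - {m}. wc g (x m - x k) / wb (x m - x k) * (\<Prod>l\<in>I - {m} - {k}. wa g (x k - x l) / wb (x k - x l))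
        * (\<Prod>k'=1..L. wb (x k - mu k')) * Bprod g mu L (map (x(k := x m)) js) (replicate L True) (replicate L False))"
      using M[OF d] M2 by (simp add: setjs Zm)
    also have "\<dots> = (\<Prod>k\<in>I - {m}. wa g (x m - x k) / wb (x m - x k)) * (\<Prod>k=1..L. wb (x m - mu k)) * Zh m
     - (\<Sum>k\<in>I - {m}. wc g (x m - x k) / wb (x m - x k) * (\<Prod>l\<in>I - {k, m}. wa g (x k - x l) / wb (x k - x l))
        * (\<Prod>k'=1..L. wb (x k - mu k')) * Zh k)"
    proof -
      have SE: "(\<Sum>k\<in>I - {m}. wc g (x m - x k) / wb (x m - x k) * (\<Prod>l\<in>I - {m} - {k}. wa g (x k - x l) / wb (x k - x l))
        * (\<Prod>k'=1..L. wb (x k - mu k')) * Bprod g mu L (map (x(k := x m)) js) (replicate L True) (replicate L False))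
        = (\<Sum>k\<in>I - {m}. wc g (x m - x k) / wb (x m - x k) * (\<Prod>l\<in>I - {k, m}. wa g (x k - x l) / wb (x k - x l))
        * (\<Prod>k'=1..L. wb (x k - mu k')) * Zh k)"
      proof (rule sum.cong[OF refl])
        fix k assume k: "k \<in> I - {m}"
        have s: "I - {m} - {k} = I - {k, m}" by auto
        show "wc g (x m - x k) / wb (x m - x k) * (\<Prod>l\<in>I - {m} - {k}. wa g (x k - x l) / wb (x k - x l))
        * (\<Prod>k'=1..L. wb (x k - mu k')) * Bprod g mu L (map (x(k := x m)) js) (replicate L True) (replicate L False)
        = wc g (x m - x k) / wb (x m - x k) * (\<Prod>l\<in>I - {k, m}. wa g (x k - x l) / wb (x k - x l))
        * (\<Prod>k'=1..L. wb (x k - mu k')) * Zh k"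
          by (simp only: s Z2[OF k])
      qed
      show ?thesis by (simp only: SE)
    qed
    finally show ?thesis .
  qed
  have rm: "rho g mu L x m m = (\<Prod>k=1..L. wa g (x m - mu k)) - (\<Prod>k=1..L. wb (x m - mu k)) * (\<Prod>k\<in>I - {m}. wa g (x m - x k) / wb (x m - x k))"
    unfolding rho_def I_def by (cases "m = 0") simp_all
  have ri: "rho g mu L x m i = wc g (x m - x i) / wb (x m - x i) * (\<Prod>l\<in>I - {i, m}. wa g (x i - x l) / wb (x i - x l))
        * (\<Prod>k'=1..L. wb (x i - mu k'))" if "i \<in> I - {m}" for i
  proof (cases "i = 0")
    case True
    then have "m \<noteq> 0" using that by auto
    moreover have "{1..L} - {m} = I - {0, m}" by (auto simp: I_def)
    ultimately show ?thesis using True by (simp add: rho_def mult_ac)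
  next
    case False
    then show ?thesis using that by (simp add: rho_def I_def mult_ac)
  qed
  have "(\<Sum>i=0..L. rho g mu L x m i * Zdw g mu L (map (x(i := x 0)) [1..<L+1])) = (\<Sum>i\<in>I. rho g mu L x m i * Zh i)"
    unfolding I_def[symmetric] by (rule sum.cong[OF refl]) (simp only: Z1)
  also have "\<dots> = rho g mu L x m m * Zh m + (\<Sum>i\<in>I - {m}. rho g mu L x m i * Zh i)"
    using fI mI by (simp add: sum.remove)
  also have "(\<Sum>i\<in>I - {m}. rho g mu L x m i * Zh i) = (\<Sum>k\<in>I - {m}. wc g (x m - x k) / wb (x m - x k) * (\<Prod>l\<in>I - {k, m}. wa g (x k - x l) / wb (x k - x l))
        * (\<Prod>k'=1..L. wb (x k - mu k')) * Zh k)"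
    by (rule sum.cong) (auto simp: ri)
  also have "rho g mu L x m m * Zh m + \<dots> = 0"
    unfolding rm using M3 by (simp add: algebra_simps)
  finally show ?thesis .
qed

end
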